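(* Let $\mathcal N=(\mathcal V,\mathcal R)$ be a non-autocatalytic reaction network on $n$ species. Let $J(\mathbf x,\mathbf k)$ and $\tilde J(\mathbf x,\mathbf k)$ be the matrices defined in the context, viewed as functions of $\mathbf x\in\mathbb R^n_{>0}$ and $\mathbf k\in\mathbb R^{\mathcal R}_{>0}$. Suppose that for every choice of $\mathbf k>\mathbf 0$ and every positive equilibrium $\mathbf x\in\mathbb R^n_{>0}$ of the mass action system $\mathcal N_{\mathbf k}$, we have $\det J(\mathbf x,\mathbf k)\neq 0$, $\tilde J(\mathbf x,\mathbf k)_{ii}<0$ for all $i$, and $-\tilde J(\mathbf x,\mathbf k)$ is a $P_0$-matrix. Then $\mathcal N$ is delay stable.
   Context: A reaction network $\mathcal N=(\mathcal V,\mathcal R)$ is a finite directed graph whose vertices (complexes) are vectors $\mathbf y\in\mathbb R^n_{\ge 0}$; each edge $\mathbf y\to\mathbf y'$ is a reaction. A reaction $\mathbf y\to\mathbf y'$ is autocatalytic if $\mathrm{supp}(\mathbf y)\cap\mathrm{supp}(\mathbf y')\neq\emptyset$ and $y_i'>y_i$ for every $i\in\mathrm{supp}(\mathbf y)\cap\mathrm{supp}(\mathbf y')$; the network is non-autocatalytic if it has none. Write $\mathbf x^{\mathbf y}=\prod_i x_i^{y_i}$. The mass action system $\mathcal N_{\mathbf k}$ is $\dot{\mathbf x}=\sum_{\mathbf y\to\mathbf y'}k_{\mathbf y\to\mathbf y'}\mathbf x^{\mathbf y}(\mathbf y'-\mathbf y)$. Given delays $\boldsymbol\tau\in\mathbb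 R^{\mathcal R}_{\ge0}$ (one per reaction), the delay mass action system $\mathcal N_{\boldsymbol\tau,\mathbf k}$ is $\dot{\mathbf x}(t)=\sum_{\mathbf y\to\mathbf y'}k_{\mathbf y\to\mathbf y'}[\mathbf x(t-\tau_{\mathbf y\to\mathbf y'})]^{\mathbf y}\mathbf y'-\sum_{\mathbf y\to\mathbf y'}k_{\mathbf y\to\mathbf y'}[\mathbf x(t)]^{\mathbf y}\mathbf y$; its positive equilibria coincide with those of $\mathcal N_{\mathbf k}$. Define $n\times n$ matrices (row $j$, column $i$): $(J_\lambda)_{ji}(\mathbf x,\mathbf k,\boldsymbol\tau)=\sum_{\mathbf y\to\mathbf y'}k_{\mathbf y\to\mathbf y'}\mathbf x^{\mathbf y}\frac{y_i}{x_i}\big(y'_je^{-\lambda\tau_{\mathbf y\to\mathbf y'}}-y_j\big)$ for $\lambda\in\mathbb C$; $J_{ji}(\mathbf x,\mathbf k)=\sum_{\mathbf y\to\mathbf y'}k_{\mathbf y\to\mathbf y'}\mathbf x^{\mathbf y}\frac{y_i}{x_i}(y'_j-y_j)$; $\tilde J_{ji}(\mathbf x,\mathbf k)=\sum_{\mathbf y\to\mathbf y'}k_{\mathbf y\to\mathbf y'}\mathbf x^{\mathbf y}\frac{y_i}{x_i}(y'_j+y_j)$ for $j\ne i$ and $\tilde J_{ii}(\mathbf x,\mathbf k)=\sum_{\mathbf y\to\mathbf y'}k_{\mathbf y\to\mathbf y'}\mathbf x^{\mathbf y}\frac{y_i}{x_i}(y'_i-y_i)$. A $P_0$-matrix is a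 real square matrix with all principal minors non-negative. The network $\mathcal N$ is delay stable if for every $\mathbf k\in\mathbb R^{\mathcal R}_{>0}$, every $\boldsymbol\tau\in\mathbb R^{\mathcal R}_{\ge0}$ and every positive equilibrium $\mathbf x^*$ of $\mathcal N_{\boldsymbol\tau,\mathbf k}$, every root $\lambda$ of the characteristic equation $\det(J_\lambda(\mathbf x^*,\mathbf k,\boldsymbol\tau)-\lambda I)=0$ has negative real part. *)

theory Defs
  imports "HOL-Analysis.Analysis" "HOL-Combinatorics.Permutations"
begin

text \<open>Species are indexed by a finite type 'n; complexes are vectors in real^'n. A reaction network is given by its finite
  set of reactions R (the complexes V are those occurring in R).\<close>

type_synonym 'n reaction = "(real^'n) \<times> (real^'n)"

definition reaction_network :: "('n::finite) reaction set \<Rightarrow> bool" where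
  "reaction_network R \<longleftrightarrow> finite R \<and>
     (\<forall>(y, y') \<in> R. y \<noteq> y' \<and> (\<forall>i. y $ i \<ge> 0 \<and> y' $ i \<ge> 0))"

definition supp :: "real^('n::finite) \<Rightarrow> 'n set" where
  "supp y = {i. y $ i \<noteq> 0}"

definition autocatalytic :: "('n::finite) reaction \<Rightarrow> bool" where
  "autocatalytic r \<longleftrightarrow> (case r of (y, y') \<Rightarrow>
     supp y \<inter> supp y' \<noteq> {} \<and> (\<forall>i \<in> supp y \<inter> supp y'. y' $ i > y $ i))"

definition non_autocatalytic :: "('n::finite) reaction set \<Rightarrow> bool" where
  "non_autocatalytic R \<longleftrightarrow> (\<forall>r \<in> R. \<not> autocatalytic r)"

definition monom :: "real^('n::finite) \<Rightarrow> real^'n \<Rightarrow> real" where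
  "monom x y = (\<Prod>i\<in>UNIV. x $ i powr y $ i)"

definition positive_vec :: "real^('n::finite) \<Rightarrow> bool" where
  "positive_vec x \<longleftrightarrow> (\<forall>i. x $ i > 0)"

definition mass_action_rhs :: "('n::finite) reaction set \<Rightarrow> ('n reaction \<Rightarrow> real) \<Rightarrow> real^'n \<Rightarrow> real^'n" where
  "mass_action_rhs R k x = (\<Sum>(y, y') \<in> R. (k (y, y') * monom x y) *\<^sub>R (y' - y))"

definition positive_equilibrium :: "('n::finite) reaction set \<Rightarrow> ('n reaction \<Rightarrow> real) \<Rightarrow> real^'n \<Rightarrow> bool" where
  "positive_equilibrium R k x \<longleftrightarrow> positive_vec x \<and> mass_action_rhs R k x = 0"

text \<open>Positive equilibria of the delay system N_{tau,k}: constant positive solutions,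
  i.e. x with sum k x^y y' - sum k x^y y = 0 (delays play no role for constants).\<close>
definition delay_positive_equilibrium ::
  "('n::finite) reaction set \<Rightarrow> ('n reaction \<Rightarrow> real) \<Rightarrow> ('n reaction \<Rightarrow> real) \<Rightarrow> real^'n \<Rightarrow> bool" where
  "delay_positive_equilibrium R tau k x \<longleftrightarrow> positive_vec x \<and>
     (\<Sum>(y, y') \<in> R. (k (y, y') * monom x y) *\<^sub>R y') - (\<Sum>(y, y') \<in> R. (k (y, y') * monom x y) *\<^sub>R y) = 0"

text \<open>Matrices: entry (row j, column i) is  A $ j $ i.\<close>
definition J_lambda :: "('n::finite) reaction set \<Rightarrow> real^'n \<Rightarrow> ('n reaction \<Rightarrow> real) \<Rightarrow> ('n reaction \<Rightarrow> real)
    \<Rightarrow> complex \<Rightarrow> complex^'n^'n" where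
  "J_lambda R x k tau lam = (\<chi> j. \<chi> i. \<Sum>(y, y') \<in> R.
      complex_of_real (k (y, y') * monom x y * (y $ i / x $ i)) *
      (complex_of_real (y' $ j) * exp (- lam * complex_of_real (tau (y, y'))) - complex_of_real (y $ j)))"

definition J_mat :: "('n::finite) reaction set \<Rightarrow> real^'n \<Rightarrow> ('n reaction \<Rightarrow> real) \<Rightarrow> real^'n^'n" where
  "J_mat R x k = (\<chi> j. \<chi> i. \<Sum>(y, y') \<in> R. k (y, y') * monom x y * (y $ i / x $ i) * (y' $ j - y $ j))"

definition J_tilde :: "('n::finite) reaction set \<Rightarrow> real^'n \<Rightarrow> ('n reaction \<Rightarrow> real) \<Rightarrow> real^'n^'n" where
  "J_tilde R x k = (\<chi> j. \<chi> i. if j \<noteq> i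
      then (\<Sum>(y, y') \<in> R. k (y, y') * monom x y * (y $ i / x $ i) * (y' $ j + y $ j))
      else (\<Sum>(y, y') \<in> R. k (y, y') * monom x y * (y $ i / x $ i) * (y' $ i - y $ i)))"

definition principal_minor :: "real^('n::finite)^'n \<Rightarrow> 'n set \<Rightarrow> real" where
  "principal_minor A S = (\<Sum>p | p permutes S. of_int (sign p) * (\<Prod>i\<in>S. A $ i $ p i))"

definition P0_matrix :: "real^('n::finite)^'n \<Rightarrow> bool" where
  "P0_matrix A \<longleftrightarrow> (\<forall>S. S \<noteq> {} \<longrightarrow> principal_minor A S \<ge> 0)"

definition delay_stable :: "('n::finite) reaction set \<Rightarrow> bool" where
  "delay_stable R \<longleftrightarrow>
     (\<forall>k tau x. (\<forall>r\<in>R. k r > 0) \<longrightarrow> (\<forall>r\<in>R. tau r \<ge> 0) \<longrightarrow>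
        delay_positive_equilibrium R tau k x \<longrightarrow>
        (\<forall>lam::complex. det (J_lambda R x k tau lam - mat lam) = 0 \<longrightarrow> Re lam < 0))"

end

theory Submission
  imports Defs
begin

definition addd :: "real^'n^'n \<Rightarrow> 'n \<Rightarrow> real \<Rightarrow> real^('n::finite)^'n" where
  "addd A s c = (\<chi> j i. A $ j $ i + (if j = s \<and> i = s then c else 0))"

lemma perm_fix_eq: "s \<in> T \<Longrightarrow> {p. p permutes T \<and> p s = s} = {p. p permutes (T - {s})}"
proof safe
  fix p assume "p permutes T" "p s = s" then show "p permutes T - {s}" by (auto intro: permutes_superset)
next
  fix p assume "p permutes T - {s}" then show "p permutes T" by (meson Diff_subset permutes_subset)
next
  fix p assume "p permutes T - {s}" then show "p s = s" by (meson DiffD2 singletonI permutes_not_in)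
qed

lemma pm_addd:
  fixes A :: "real^('n::finite)^'n"
  shows "principal_minor (addd A s c) T = principal_minor A T +
     (if s \<in> T then c * principal_minor A (T - {s}) else 0)"
proof (cases "s \<in> T")
  case False
  have "principal_minor (addd A s c) T = principal_minor A T"
    unfolding principal_minor_def
  proof (rule sum.cong[OF refl])
    fix p assume "p \<in> {p. p permutes T}"
    have "(\<Prod>i\<in>T. addd A s c $ i $ p i) = (\<Prod>i\<in>T. A $ i $ p i)"
      by (rule prod.cong) (use False in \<open>auto simp: addd_def\<close>)
    then show "real_of_int (sign p) * (\<Prod>i\<in>T. addd A s c $ i $ p i) = real_of_int (sign p) * (\<Prod>i\<in>T. A $ i $ p i)" by simp
  qed
  then show ?thesis using False by simp
next
  case True
  have fin: "finite {p. p permutes T}" by (rule finite_permutations) simp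
  have T: "T = insert s (T - {s})" using True by auto
  have "\<And>p. p permutes T \<Longrightarrow> real_of_int (sign p) * (\<Prod>i\<in>T. addd A s c $ i $ p i) =
     real_of_int (sign p) * (\<Prod>i\<in>T. A $ i $ p i) + (if p s = s then c * (real_of_int (sign p) * (\<Prod>i\<in>T-{s}. A $ i $ p i)) else 0)"
  proof -
    fix p assume p: "p permutes T"
    have e1: "(\<Prod>i\<in>T. addd A s c $ i $ p i) = addd A s c $ s $ p s * (\<Prod>i\<in>T-{s}. addd A s c $ i $ p i)"
      by (subst T, subst prod.insert) auto
    have e2: "(\<Prod>i\<in>T. A $ i $ p i) = A $ s $ p s * (\<Prod>i\<in>T-{s}. A $ i $ p i)"
      by (subst T, subst prod.insert) auto
    have e3: "(\<Prod>i\<in>T-{s}. addd A s c $ i $ p i) = (\<Prod>i\<in>T-{s}. A $ i $ p i)"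
      by (rule prod.cong) (auto simp: addd_def)
    show "?thesis p" unfolding e1 e2 e3 by (auto simp: addd_def algebra_simps)
  qed
  then have "principal_minor (addd A s c) T = (\<Sum>p | p permutes T. real_of_int (sign p) * (\<Prod>i\<in>T. A $ i $ p i) + (if p s = s then c * (real_of_int (sign p) * (\<Prod>i\<in>T-{s}. A $ i $ p i)) else 0))"
    unfolding principal_minor_def by (intro sum.cong) auto
  also have "\<dots> = principal_minor A T + (\<Sum>p \<in> {p. p permutes T} \<inter> {p. p s = s}. c * (real_of_int (sign p) * (\<Prod>i\<in>T-{s}. A $ i $ p i)))"
    unfolding sum.distrib principal_minor_def sum.inter_restrict[OF fin] by simp
  also have "{p. p permutes T} \<inter> {p. p s = s} = {p. p permutes (T - {s})}"
    using perm_fix_eq[OF True] by auto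
  finally show ?thesis using True by (simp add: principal_minor_def sum_distrib_left)
qed

definition addg :: "real^('n::finite)^'n \<Rightarrow> ('n \<Rightarrow> real) \<Rightarrow> 'n set \<Rightarrow> real^'n^'n" where
  "addg A g S = (\<chi> j i. A $ j $ i + (if j = i \<and> i \<in> S then g i else 0))"

lemma addg_empty: "addg A g {} = A"
  by (simp add: addg_def vec_eq_iff)

lemma addg_insert: "addg A g (insert s S) = addd (addg A g S) s (g s)" if "s \<notin> S"
  using that by (auto simp: addg_def addd_def vec_eq_iff)

definition P0all :: "real^('n::finite)^'n \<Rightarrow> bool" where
  "P0all A \<longleftrightarrow> (\<forall>T. principal_minor A T \<ge> 0)"

lemma pm_empty: "principal_minor A {} = 1"
  by (simp add: principal_minor_def)

lemma P0_all: "P0_matrix A \<Longrightarrow> P0all A"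
  unfolding P0_matrix_def P0all_def
proof (intro allI impI)
  fix T assume H: "\<forall>S. S \<noteq> {} \<longrightarrow> 0 \<le> principal_minor A S"
  show "0 \<le> principal_minor A T"
  proof (cases "T = {}")
    case True then show ?thesis by (simp add: pm_empty)
  next
    case False then show ?thesis using H by blast
  qed
qed

lemma P0all_addg: "P0all A \<Longrightarrow> \<forall>i\<in>S. g i \<ge> 0 \<Longrightarrow> P0all (addg A g S)"
proof (induction S rule: infinite_finite_induct)
  case (infinite S) then show ?case by simp
next
  case empty then show ?case by (simp add: addg_empty)
next
  case (insert s S)
  then have B: "P0all (addg A g S)" by auto
  show ?case unfolding addg_insert[OF insert(2)] P0all_def pm_addd
    using B insert(5) unfolding P0all_def by (auto intro!: add_nonneg_nonneg mult_nonneg_nonneg)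
qed

lemma pos_addg: "P0all A \<Longrightarrow> \<forall>i\<in>S. g i > 0 \<Longrightarrow> principal_minor (addg A g S) S > 0"
proof (induction S rule: infinite_finite_induct)
  case (infinite S) then show ?case by simp
next
  case empty then show ?case by (simp add: addg_empty pm_empty)
next
  case (insert s S)
  then have B: "principal_minor (addg A g S) S > 0" by auto
  have C: "P0all (addg A g S)" using insert by (intro P0all_addg) auto
  have D: "insert s S - {s} = S" using insert(2) by auto
  show ?case unfolding addg_insert[OF insert(2)] pm_addd D
    using B C insert(5) unfolding P0all_def by (simp add: add_nonneg_pos)
qed

lemma det_extend:
  fixes M :: "real^('n::finite)^'n"
  assumes "\<And>j i. j \<notin> S \<Longrightarrow> M $ j $ i = (if i = j then 1 else 0)"
  shows "det M = principal_minor M S"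
proof -
  have "principal_minor M S = (\<Sum>p | p permutes S. of_int (sign p) * (\<Prod>i\<in>UNIV. M $ i $ p i))"
    unfolding principal_minor_def
  proof (rule sum.cong[OF refl])
    fix p assume "p \<in> {p. p permutes S}"
    then have p: "p permutes S" by simp
    have "(\<Prod>i\<in>UNIV. M $ i $ p i) = (\<Prod>i\<in>S. M $ i $ p i) * (\<Prod>i\<in>UNIV - S. M $ i $ p i)"
      using prod.subset_diff[of S UNIV "\<lambda>i. M $ i $ p i"] by (simp add: mult.commute)
    also have "(\<Prod>i\<in>UNIV - S. M $ i $ p i) = 1"
      using p assms by (auto intro!: prod.neutral simp: permutes_not_in)
    finally show "of_int (sign p) * (\<Prod>i\<in>S. M $ i $ p i) = of_int (sign p) * (\<Prod>i\<in>UNIV. M $ i $ p i)" by simp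
  qed
  also have "\<dots> = det M"
    unfolding det_def
  proof (rule sum.mono_neutral_cong_left)
    show "finite {p. p permutes (UNIV::'n set)}" by (rule finite_permutations) simp
    show "{p. p permutes S} \<subseteq> {p. p permutes UNIV}" by (auto intro: permutes_subset)
    show "\<forall>p\<in>{p. p permutes UNIV} - {p. p permutes S}. of_int (sign p) * (\<Prod>i\<in>UNIV. M $ i $ p i) = 0"
    proof
      fix p assume "p \<in> {p. p permutes UNIV} - {p. p permutes S}"
      then have pu: "p permutes UNIV" and ns: "\<not> p permutes S" by auto
      obtain i where "i \<notin> S" "p i \<noteq> i"
        using ns pu permutes_superset[OF pu, of S] by auto
      then have "M $ i $ p i = 0" using assms by simp
      then show "of_int (sign p) * (\<Prod>i\<in>UNIV. M $ i $ p i) = 0" by (auto intro!: prod_zero)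
    qed
  qed simp
  finally show ?thesis by simp
qed

lemma det_zero_iff_ker:
  fixes M :: "'a::field^('n::finite)^'n"
  shows "det M = 0 \<longleftrightarrow> (\<exists>u. u \<noteq> 0 \<and> M *v u = 0)"
proof -
  have "det M \<noteq> 0 \<longleftrightarrow> inj ((*v) M)"
    using det_nz_iff_inj_gen[of "(*v) M"] by simp
  moreover have "inj ((*v) M) \<longleftrightarrow> (\<forall>u. M *v u = 0 \<longrightarrow> u = 0)"
  proof
    assume I: "inj ((*v) M)"
    show "\<forall>u. M *v u = 0 \<longrightarrow> u = 0"
    proof (intro allI impI)
      fix u assume "M *v u = 0"
      then have "M *v u = M *v 0" by simp
      then show "u = 0" by (rule injD[OF I])
    qed
  next
    assume H: "\<forall>u. M *v u = 0 \<longrightarrow> u = 0"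
    show "inj ((*v) M)"
    proof (rule injI)
      fix a b assume "M *v a = M *v b"
      then have "M *v (a - b) = 0" by (simp add: matrix_vector_mult_diff_distrib)
      then show "a = b" using H by auto
    qed
  qed
  ultimately show ?thesis by blast
qed

lemma key_real:
  fixes A :: "real^('n::finite)^'n" and u :: "real^'n" and e :: "'n \<Rightarrow> real"
  assumes P: "P0all A" and e: "\<forall>j. e j > 0" and u0: "\<forall>j. u $ j \<ge> 0" and unz: "u \<noteq> 0"
    and ineq: "\<forall>j. (\<Sum>i\<in>UNIV. A $ j $ i * u $ i) + e j * u $ j \<le> 0"
  shows False
proof -
  define S where "S = {j. u $ j > 0}"
  define g where "g j = - (\<Sum>i\<in>UNIV. A $ j $ i * u $ i) / u $ j" for j
  have gpos: "\<forall>j\<in>S. g j > 0"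
  proof
    fix j assume "j \<in> S"
    then have uj: "u $ j > 0" by (simp add: S_def)
    have "e j * u $ j > 0" using e uj by simp
    then have "- (\<Sum>i\<in>UNIV. A $ j $ i * u $ i) > 0" using ineq[rule_format, of j] by linarith
    then show "g j > 0" unfolding g_def using uj by (metis divide_pos_pos)
  qed
  define M :: "real^'n^'n" where "M = (\<chi> j i. if j \<in> S then addg A g S $ j $ i else (if i = j then 1 else 0))"
  have Mu: "M *v u = 0"
  unfolding vec_eq_iff
  proof
    fix j
    show "(M *v u) $ j = 0 $ j"
    proof (cases "j \<in> S")
      case True
      then have uj: "u $ j > 0" by (simp add: S_def)
      have "(M *v u) $ j = (\<Sum>i\<in>UNIV. A $ j $ i * u $ i + (if i = j then g j * u $ j else 0))"
        unfolding matrix_vector_mult_def M_def addg_def using True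
        by (auto intro!: sum.cong simp: algebra_simps)
      also have "\<dots> = (\<Sum>i\<in>UNIV. A $ j $ i * u $ i) + g j * u $ j"
        by (simp add: sum.distrib)
      also have "\<dots> = 0" unfolding g_def using uj by simp
      finally show ?thesis by simp
    next
      case False
      then have uj: "u $ j = 0" using u0[rule_format, of j] by (simp add: S_def)
      have "(M *v u) $ j = (\<Sum>i\<in>UNIV. (if i = j then 1 else 0) * u $ i)"
        unfolding matrix_vector_mult_def M_def using False by simp
      also have "\<dots> = (\<Sum>i\<in>UNIV. if i = j then u $ j else 0)"
        by (rule sum.cong) auto
      also have "\<dots> = 0" using uj by simp
      finally show ?thesis by simp
    qed
  qed
  then have d0: "det M = 0" using det_zero_iff_ker unz by blast
  have "det M = principal_minor M S"
    by (rule det_extend) (simp add: M_def)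
  also have "\<dots> = principal_minor (addg A g S) S"
    unfolding principal_minor_def
    by (intro sum.cong refl arg_cong2[where f="(*)"] prod.cong) (auto simp: M_def permutes_in_image)
  finally have "det M > 0" using pos_addg[OF P gpos] by simp
  then show False using d0 by simp
qed

lemma offdiag_bound:
  fixes a p q :: "'r \<Rightarrow> real" and w :: "'r \<Rightarrow> complex"
  assumes "\<forall>r\<in>R. a r \<ge> 0 \<and> p r \<ge> 0 \<and> q r \<ge> 0 \<and> cmod (w r) \<le> 1"
  shows "cmod (\<Sum>r\<in>R. of_real (a r) * (of_real (p r) * w r - of_real (q r))) \<le> (\<Sum>r\<in>R. a r * (p r + q r))"
proof -
  have "cmod (\<Sum>r\<in>R. of_real (a r) * (of_real (p r) * w r - of_real (q r))) \<le>
        (\<Sum>r\<in>R. cmod (of_real (a r) * (of_real (p r) * w r - of_real (q r))))"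
    by (rule norm_sum)
  also have "\<dots> \<le> (\<Sum>r\<in>R. a r * (p r + q r))"
  proof (rule sum_mono)
    fix r assume r: "r \<in> R"
    then have h: "a r \<ge> 0" "p r \<ge> 0" "q r \<ge> 0" "cmod (w r) \<le> 1" using assms by auto
    have "cmod (of_real (p r) * w r - of_real (q r)) \<le> cmod (of_real (p r) * w r) + cmod (of_real (q r))"
      by (rule norm_triangle_ineq4)
    also have "\<dots> \<le> p r + q r"
      using h by (simp add: norm_mult mult_left_le)
    finally have "cmod (of_real (p r) * w r - of_real (q r)) \<le> p r + q r" .
    then show "cmod (of_real (a r) * (of_real (p r) * w r - of_real (q r))) \<le> a r * (p r + q r)"
      using h by (simp add: norm_mult mult_left_mono)
  qed
  finally show ?thesis .
qed

lemma diag_bound: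
  fixes a p q :: "'r \<Rightarrow> real" and w :: "'r \<Rightarrow> complex" and lam :: complex
  assumes fin: "finite R"
    and h: "\<forall>r\<in>R. a r \<ge> 0 \<and> p r \<ge> 0 \<and> cmod (w r) \<le> 1"
    and lam: "Re lam \<ge> 0" "lam \<noteq> 0"
    and B: "(\<Sum>r\<in>R. a r * (p r - q r)) < 0"
  shows "cmod ((\<Sum>r\<in>R. of_real (a r) * (of_real (p r) * w r - of_real (q r))) - lam) > - (\<Sum>r\<in>R. a r * (p r - q r))"
proof -
  define Q where "Q = lam - (\<Sum>r\<in>R. of_real (a r) * (of_real (p r) * w r - of_real (q r)))"
  define D where "D = (\<Sum>r\<in>R. a r * p r * (1 - Re (w r)))"
  have ReQ1: "Re Q = Re lam - (\<Sum>r\<in>R. a r * (p r * Re (w r) - q r))"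
    unfolding Q_def by simp
  have ReQ2: "(\<Sum>r\<in>R. a r * (p r * Re (w r) - q r)) = (\<Sum>r\<in>R. a r * (p r - q r)) - D"
    unfolding D_def sum_subtractf[symmetric] by (rule sum.cong) (auto simp: algebra_simps)
  have ReQ: "Re Q = Re lam - (\<Sum>r\<in>R. a r * (p r - q r)) + D"
    using ReQ1 ReQ2 by simp
  have ImQ: "Im Q = Im lam - (\<Sum>r\<in>R. a r * p r * Im (w r))"
    unfolding Q_def by (simp add: algebra_simps)
  have Reb: "\<forall>r\<in>R. Re (w r) \<le> 1" using h by (meson abs_Re_le_cmod abs_le_D1 order.trans)
  have Dnn: "\<forall>r\<in>R. a r * p r * (1 - Re (w r)) \<ge> 0" using h Reb by auto
  then have D0: "D \<ge> 0" unfolding D_def by (simp add: sum_nonneg)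
  have nQ: "cmod ((\<Sum>r\<in>R. of_real (a r) * (of_real (p r) * w r - of_real (q r))) - lam) = cmod Q"
    unfolding Q_def by (simp add: norm_minus_commute)
  show ?thesis unfolding nQ
  proof (cases "Re lam + D > 0")
    case True
    then have "Re Q > - (\<Sum>r\<in>R. a r * (p r - q r))" using ReQ by linarith
    then show "cmod Q > - (\<Sum>r\<in>R. a r * (p r - q r))"
      using abs_Re_le_cmod[of Q] by linarith
  next
    case False
    then have RL: "Re lam = 0" and DD: "D = 0" using lam D0 by linarith+
    have each: "\<forall>r\<in>R. a r * p r * (1 - Re (w r)) = 0"
      using DD Dnn fin unfolding D_def by (simp add: sum_nonneg_eq_0_iff)
    have "\<forall>r\<in>R. a r * p r * Im (w r) = 0"
    proof
      fix r assume r: "r \<in> R"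
      show "a r * p r * Im (w r) = 0"
      proof (cases "Re (w r) = 1")
        case True
        have "(cmod (w r))\<^sup>2 \<le> 1" using h r by (simp add: abs_square_le_1)
        then have "(Im (w r))\<^sup>2 \<le> 0" using True by (simp add: cmod_power2)
        then show ?thesis by simp
      next
        case False then show ?thesis using each r by auto
      qed
    qed
    then have "(\<Sum>r\<in>R. a r * p r * Im (w r)) = 0" by (intro sum.neutral) auto
    then have "Im Q = Im lam" unfolding ImQ by simp
    moreover have "Im lam \<noteq> 0" using RL lam(2) complex_eq_iff by auto
    ultimately have ImQ0: "(Im Q)\<^sup>2 > 0" by simp
    have ReQ': "Re Q = - (\<Sum>r\<in>R. a r * (p r - q r))" using ReQ RL DD by simp
    have "(- (\<Sum>r\<in>R. a r * (p r - q r)))\<^sup>2 < (cmod Q)\<^sup>2"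
      using ImQ0 unfolding cmod_power2 ReQ' by simp
    then show "cmod Q > - (\<Sum>r\<in>R. a r * (p r - q r))"
      using power_less_imp_less_base by (metis norm_ge_zero)
  qed
qed

lemma det_of_real:
  fixes B :: "real^('n::finite)^'n"
  shows "det ((\<chi> j i. complex_of_real (B $ j $ i)) :: complex^'n^'n) = complex_of_real (det B)"
  unfolding det_def by simp


theorem corollary1:
  fixes R :: "('n::finite) reaction set"
  assumes "reaction_network R"
    and "non_autocatalytic R"
    and "\<forall>k x. (\<forall>r\<in>R. k r > 0) \<longrightarrow> positive_equilibrium R k x \<longrightarrow>
           det (J_mat R x k) \<noteq> 0 \<and> (\<forall>i. J_tilde R x k $ i $ i < 0) \<and> P0_matrix (- J_tilde R x k)"
  shows "delay_stable R"
proof -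
  have fin: "finite R" and nn: "\<forall>r\<in>R. \<forall>i. fst r $ i \<ge> 0 \<and> snd r $ i \<ge> 0"
    using assms(1) unfolding reaction_network_def by auto
  show ?thesis unfolding delay_stable_def
  proof (intro allI impI)
    fix k tau x and lam :: complex
    assume kpos: "\<forall>r\<in>R. k r > 0" and tpos: "\<forall>r\<in>R. tau r \<ge> 0"
      and deq: "delay_positive_equilibrium R tau k x"
      and dz: "det (J_lambda R x k tau lam - mat lam) = 0"
    have xpos: "\<forall>i. x $ i > 0" using deq unfolding delay_positive_equilibrium_def positive_vec_def by auto
    have "mass_action_rhs R k x = 0"
      using deq unfolding delay_positive_equilibrium_def mass_action_rhs_def
      by (simp add: split_beta scaleR_diff_right sum_subtractf)
    then have peq: "positive_equilibrium R k x"
      using deq unfolding positive_equilibrium_def delay_positive_equilibrium_def by auto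
    have H: "det (J_mat R x k) \<noteq> 0" "\<forall>i. J_tilde R x k $ i $ i < 0" "P0_matrix (- J_tilde R x k)"
      using assms(3) kpos peq by auto
    show "Re lam < 0"
    proof (rule ccontr)
      assume "\<not> Re lam < 0"
      then have rl: "Re lam \<ge> 0" by simp
      define a where "a r i = k r * monom x (fst r) * (fst r $ i / x $ i)" for r i
      define w where "w r = exp (- lam * complex_of_real (tau r))" for r
      have monpos: "monom x y > 0" for y
        unfolding monom_def
      proof (intro prod_pos)
        fix i show "0 < x $ i powr y $ i" using xpos[rule_format, of i] by simp
      qed
      have a_nn: "\<forall>r\<in>R. a r i \<ge> 0" for i
      proof
        fix r assume r: "r \<in> R"
        have h: "k r > 0" "monom x (fst r) > 0" "fst r $ i \<ge> 0" "x $ i > 0"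
          using kpos nn xpos monpos r by auto
        then show "a r i \<ge> 0" unfolding a_def
          by (intro mult_nonneg_nonneg divide_nonneg_pos) auto
      qed
      have w1: "\<forall>r\<in>R. cmod (w r) \<le> 1"
      proof
        fix r assume "r \<in> R"
        then have "tau r \<ge> 0" using tpos by auto
        then have "Re (- lam * complex_of_real (tau r)) \<le> 0" using rl by simp
        then show "cmod (w r) \<le> 1" unfolding w_def by simp
      qed
      have Jl: "J_lambda R x k tau lam $ j $ i = (\<Sum>r\<in>R. of_real (a r i) * (of_real (snd r $ j) * w r - of_real (fst r $ j)))" for j i
        unfolding J_lambda_def a_def w_def by (simp add: split_beta)
      have Jt_off: "J_tilde R x k $ j $ i = (\<Sum>r\<in>R. a r i * (snd r $ j + fst r $ j))" if "j \<noteq> i" for j i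
        unfolding J_tilde_def a_def using that by (simp add: split_beta)
      have Jt_diag: "J_tilde R x k $ j $ j = (\<Sum>r\<in>R. a r j * (snd r $ j - fst r $ j))" for j
        unfolding J_tilde_def a_def by (simp add: split_beta)
      show False
      proof (cases "lam = 0")
        case True
        have "J_lambda R x k tau lam - mat lam = (\<chi> j i. complex_of_real (J_mat R x k $ j $ i))"
          unfolding vec_eq_iff True by (simp add: J_lambda_def J_mat_def split_beta mat_def)
        then have "det (J_lambda R x k tau lam - mat lam) = complex_of_real (det (J_mat R x k))"
          by (simp add: det_of_real)
        then show False using dz H(1) by simp
      next
        case False
        define Mc where "Mc = J_lambda R x k tau lam - mat lam"
        obtain z where znz: "z \<noteq> 0" and Mz: "Mc *v z = 0"
          using dz det_zero_iff_ker unfolding Mc_def by blast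
        have Mc_off: "cmod (Mc $ j $ i) \<le> J_tilde R x k $ j $ i" if "j \<noteq> i" for j i
        proof -
          have e: "Mc $ j $ i = J_lambda R x k tau lam $ j $ i" unfolding Mc_def using that by (simp add: mat_def)
          have "cmod (J_lambda R x k tau lam $ j $ i) \<le> (\<Sum>r\<in>R. a r i * (snd r $ j + fst r $ j))"
            unfolding Jl by (rule offdiag_bound) (use a_nn nn w1 in auto)
          then show ?thesis unfolding e Jt_off[OF that] .
        qed
        have Mc_diag: "cmod (Mc $ j $ j) > - J_tilde R x k $ j $ j" for j
        proof -
          have e: "Mc $ j $ j = J_lambda R x k tau lam $ j $ j - lam" unfolding Mc_def by (simp add: mat_def)
          have "cmod (J_lambda R x k tau lam $ j $ j - lam) > - (\<Sum>r\<in>R. a r j * (snd r $ j - fst r $ j))"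
            unfolding Jl
          proof (rule diag_bound)
            show "finite R" by (rule fin)
            show "\<forall>r\<in>R. 0 \<le> a r j \<and> 0 \<le> snd r $ j \<and> cmod (w r) \<le> 1" using a_nn nn w1 by auto
            show "0 \<le> Re lam" by (rule rl)
            show "lam \<noteq> 0" by (rule False)
            show "(\<Sum>r\<in>R. a r j * (snd r $ j - fst r $ j)) < 0" using H(2) unfolding Jt_diag by auto
          qed
          then show ?thesis unfolding e Jt_diag .
        qed
        define u where "u = (\<chi> i. cmod (z $ i))"
        have row: "cmod (Mc $ j $ j) * u $ j \<le> (\<Sum>i\<in>UNIV-{j}. J_tilde R x k $ j $ i * u $ i)" for j
        proof -
          have "0 = (Mc *v z) $ j" using Mz by simp
          also have "\<dots> = Mc $ j $ j * z $ j + (\<Sum>i\<in>UNIV-{j}. Mc $ j $ i * z $ i)"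
            unfolding matrix_vector_mult_def by (simp add: sum.remove[of UNIV j])
          finally have "Mc $ j $ j * z $ j = - (\<Sum>i\<in>UNIV-{j}. Mc $ j $ i * z $ i)"
            by (simp add: eq_neg_iff_add_eq_0)
          then have "cmod (Mc $ j $ j * z $ j) = cmod (\<Sum>i\<in>UNIV-{j}. Mc $ j $ i * z $ i)"
            by (metis norm_minus_cancel)
          then have "cmod (Mc $ j $ j) * u $ j = cmod (\<Sum>i\<in>UNIV-{j}. Mc $ j $ i * z $ i)"
            unfolding u_def by (simp add: norm_mult)
          also have "\<dots> \<le> (\<Sum>i\<in>UNIV-{j}. cmod (Mc $ j $ i * z $ i))" by (rule norm_sum)
          also have "\<dots> \<le> (\<Sum>i\<in>UNIV-{j}. J_tilde R x k $ j $ i * u $ i)"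
          proof (rule sum_mono)
            fix i assume "i \<in> UNIV - {j}"
            then have "j \<noteq> i" by auto
            then show "cmod (Mc $ j $ i * z $ i) \<le> J_tilde R x k $ j $ i * u $ i"
              unfolding u_def using Mc_off[of j i] by (simp add: norm_mult mult_right_mono)
          qed
          finally show ?thesis .
        qed
        show False
        proof (rule key_real[of "- J_tilde R x k" "\<lambda>j. cmod (Mc $ j $ j) + J_tilde R x k $ j $ j" u])
          show "P0all (- J_tilde R x k)" using H(3) by (rule P0_all)
          show "\<forall>j. 0 < cmod (Mc $ j $ j) + J_tilde R x k $ j $ j"
          proof
            fix j show "0 < cmod (Mc $ j $ j) + J_tilde R x k $ j $ j" using Mc_diag[of j] by linarith
          qed
          show "\<forall>j. 0 \<le> u $ j" unfolding u_def by simp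
          show "u \<noteq> 0"
          proof
            assume "u = 0"
            then have "\<forall>i. z $ i = 0" unfolding u_def vec_eq_iff by simp
            then show False using znz by (simp add: vec_eq_iff)
          qed
          show "\<forall>j. (\<Sum>i\<in>UNIV. (- J_tilde R x k) $ j $ i * u $ i) + (cmod (Mc $ j $ j) + J_tilde R x k $ j $ j) * u $ j \<le> 0"
          proof
            fix j
            have "(\<Sum>i\<in>UNIV. (- J_tilde R x k) $ j $ i * u $ i) = - J_tilde R x k $ j $ j * u $ j - (\<Sum>i\<in>UNIV-{j}. J_tilde R x k $ j $ i * u $ i)"
              by (simp add: sum.remove[of UNIV j] sum_negf)
            then show "(\<Sum>i\<in>UNIV. (- J_tilde R x k) $ j $ i * u $ i) + (cmod (Mc $ j $ j) + J_tilde R x k $ j $ j) * u $ j \<le> 0"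
              using row[of j] by (simp add: algebra_simps)
          qed
        qed
      qed
    qed
  qed
qed

end
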